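(* Let $(X,\delta,c)$ be an accepting automaton over $\Sigma$ and let $\mu\mathrm{PL}(\delta,c)$ be as in the context. Then $\mu\mathrm{PL}(\delta,c)$ is isomorphic to a preformation of languages: the map $\mathcal{U}\mapsto L(\mathcal{U})$ is an isomorphism from the state space $P(\Sigma^\ast/{\approx})$ (a complete atomic Boolean algebra) onto a preformation of languages, under which the transitions of $\mu\mathrm{PL}(\delta,c)$ correspond to language derivatives.
   Context: $\Sigma$ is a finite alphabet, $\Sigma^\ast$ the free monoid with empty word $\epsilon$, $u^r$ the reversal of $u$. An accepting automaton is $(X,\delta,c)$ with $\delta:X\to X^\Sigma$ (extended to words by $\delta(x)(\epsilon)=x$, $\delta(x)(wa)=\delta(\delta(x)(w))(a)$) and $c\subseteq X$. Define $\widehat{\delta}:P(X)\to P(X)^\Sigma$ by $\widehat{\delta}(U)(a)=\{x\mid\delta(x)(a)\in U\}$, extended to words, so $\widehat{\delta}(U)(w)=\{x\mid\delta(x)(w^r)\in U\}$. Let $\langle c\rangle=\{\widehat{\delta}(c)(w)\mid w\in\Sigma^\ast\}$ and $u\approx v$ iff $\widehat{\delta}(U)(u)=\widehat{\delta}(U)(v)$ for all $U\in\langle c\rangle$. $\mu\mathrm{PL}(\delta,c)$ has state space $P(\Sigma^\ast/{\approx})$, transition $\widehat{\sigma}(\mathcal{U})(u)=\{[w]\mid[wu^r]\in\mathcal{U}\}$ and final states $\{\mathcal{U}\mid[\epsilon]\in\mathcal{U}\}$; $L(\mathcal{U})=\{u\mid[\epsilon]\in\widehat{\sigma}(\mathcal{U})(u)\}$.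 A preformation of languages is a complete atomic Boolean subalgebra of the powerset $2^{\Sigma^\ast}$ which is closed under left derivatives $U\mapsto\{w\mid aw\in U\}$ and right derivatives $U\mapsto\{w\mid wa\in U\}$ for all $a\in\Sigma$. *)

theory Defs
  imports Main
begin

(* Words over the alphabet 'a are lists; [] is epsilon, rev is reversal. *)

definition delta_w :: "('x \<Rightarrow> 'a \<Rightarrow> 'x) \<Rightarrow> 'x \<Rightarrow> 'a list \<Rightarrow> 'x" where
  "delta_w \<delta> x w = foldl \<delta> x w"

definition hat_delta :: "('x \<Rightarrow> 'a \<Rightarrow> 'x) \<Rightarrow> 'x set \<Rightarrow> 'a list \<Rightarrow> 'x set" where
  "hat_delta \<delta> U w = {x. delta_w \<delta> x (rev w) \<in> U}"

definition gen_c :: "('x \<Rightarrow> 'a \<Rightarrow> 'x) \<Rightarrow> 'x set \<Rightarrow> 'x set set" where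
  "gen_c \<delta> c = {hat_delta \<delta> c w | w. True}"

definition approx_rel :: "('x \<Rightarrow> 'a \<Rightarrow> 'x) \<Rightarrow> 'x set \<Rightarrow> ('a list \<times> 'a list) set" where
  "approx_rel \<delta> c = {(u, v). \<forall>U \<in> gen_c \<delta> c. hat_delta \<delta> U u = hat_delta \<delta> U v}"

definition cls :: "('x \<Rightarrow> 'a \<Rightarrow> 'x) \<Rightarrow> 'x set \<Rightarrow> 'a list \<Rightarrow> 'a list set" where
  "cls \<delta> c w = approx_rel \<delta> c `` {w}"

(* the quotient Sigma^*/\<approx>; the state space of muPL is its powerset *)
definition quot :: "('x \<Rightarrow> 'a \<Rightarrow> 'x) \<Rightarrow> 'x set \<Rightarrow> 'a list set set" where
  "quot \<delta> c = (UNIV :: 'a list set) // approx_rel \<delta> c"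

definition muPL_trans :: "('x \<Rightarrow> 'a \<Rightarrow> 'x) \<Rightarrow> 'x set \<Rightarrow> 'a list set set \<Rightarrow> 'a list \<Rightarrow> 'a list set set" where
  "muPL_trans \<delta> c \<U> u = {cls \<delta> c w | w. cls \<delta> c (w @ rev u) \<in> \<U>}"

definition muPL_final :: "('x \<Rightarrow> 'a \<Rightarrow> 'x) \<Rightarrow> 'x set \<Rightarrow> 'a list set set set" where
  "muPL_final \<delta> c = {\<U>. \<U> \<subseteq> quot \<delta> c \<and> cls \<delta> c [] \<in> \<U>}"

definition muPL_lang :: "('x \<Rightarrow> 'a \<Rightarrow> 'x) \<Rightarrow> 'x set \<Rightarrow> 'a list set set \<Rightarrow> 'a list set" where
  "muPL_lang \<delta> c \<U> = {u. cls \<delta> c [] \<in> muPL_trans \<delta> c \<U> u}"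

definition lderiv :: "'a \<Rightarrow> 'a list set \<Rightarrow> 'a list set" where
  "lderiv a U = {w. a # w \<in> U}"

definition rderiv :: "'a \<Rightarrow> 'a list set \<Rightarrow> 'a list set" where
  "rderiv a U = {w. w @ [a] \<in> U}"

definition is_atom :: "'b set set \<Rightarrow> 'b set \<Rightarrow> bool" where
  "is_atom B A \<longleftrightarrow> A \<in> B \<and> A \<noteq> {} \<and> (\<forall>V \<in> B. V \<subseteq> A \<longrightarrow> V = {} \<or> V = A)"

definition complete_atomic_boolean_subalgebra :: "'b set set \<Rightarrow> bool" where
  "complete_atomic_boolean_subalgebra B \<longleftrightarrow>
     (\<forall>S \<subseteq> B. \<Union>S \<in> B) \<and>
     (\<forall>S \<subseteq> B. \<Inter>S \<in> B) \<and>
     (\<forall>U \<in> B. - U \<in> B) \<and>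
     (\<forall>U \<in> B. U = \<Union>{A. is_atom B A \<and> A \<subseteq> U})"

definition preformation :: "'a list set set \<Rightarrow> bool" where
  "preformation B \<longleftrightarrow> complete_atomic_boolean_subalgebra B \<and>
     (\<forall>U \<in> B. \<forall>a. lderiv a U \<in> B \<and> rderiv a U \<in> B)"

end

theory Submission
  imports Defs
begin

lemma hd_comp: "hat_delta \<delta> (hat_delta \<delta> U w) w' = hat_delta \<delta> U (w @ w')"
  by (simp add: hat_delta_def delta_w_def)

lemma gen_closed: "U \<in> gen_c \<delta> c \<Longrightarrow> hat_delta \<delta> U w \<in> gen_c \<delta> c"
  unfolding gen_c_def by (auto simp: hd_comp)

lemma equiv_R: "equiv UNIV (approx_rel \<delta> c)"
  unfolding equiv_def refl_on_def sym_def trans_def approx_rel_def by auto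

lemma R_right: "(u, v) \<in> approx_rel \<delta> c \<Longrightarrow> (u @ z, v @ z) \<in> approx_rel \<delta> c"
  unfolding approx_rel_def by (auto simp: hd_comp[symmetric])

lemma R_left: "(u, v) \<in> approx_rel \<delta> c \<Longrightarrow> (z @ u, z @ v) \<in> approx_rel \<delta> c"
  unfolding approx_rel_def
proof (clarsimp)
  fix U assume h: "\<forall>U\<in>gen_c \<delta> c. hat_delta \<delta> U u = hat_delta \<delta> U v" and U: "U \<in> gen_c \<delta> c"
  have "hat_delta \<delta> U (z @ u) = hat_delta \<delta> (hat_delta \<delta> U z) u" by (simp add: hd_comp)
  also have "\<dots> = hat_delta \<delta> (hat_delta \<delta> U z) v" using h gen_closed[OF U] by blast
  also have "\<dots> = hat_delta \<delta> U (z @ v)" by (simp add: hd_comp)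
  finally show "hat_delta \<delta> U (z @ u) = hat_delta \<delta> U (z @ v)" .
qed

lemma cls_eq: "cls \<delta> c u = cls \<delta> c v \<longleftrightarrow> (u, v) \<in> approx_rel \<delta> c"
  unfolding cls_def using equiv_class_eq_iff[OF equiv_R] by blast

lemma cls_quot: "cls \<delta> c w \<in> quot \<delta> c"
  unfolding cls_def quot_def by (rule quotientI, rule UNIV_I)

lemma quot_cls: "X \<in> quot \<delta> c \<Longrightarrow> \<exists>w. X = cls \<delta> c w"
  unfolding cls_def quot_def by (auto elim: quotientE)

lemma L_eq: "muPL_lang \<delta> c U = {u. cls \<delta> c (rev u) \<in> U}"
proof -
  have "cls \<delta> c [] \<in> muPL_trans \<delta> c U u \<longleftrightarrow> cls \<delta> c (rev u) \<in> U" for u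
  proof
    assume "cls \<delta> c [] \<in> muPL_trans \<delta> c U u"
    then obtain w where w: "cls \<delta> c [] = cls \<delta> c w" "cls \<delta> c (w @ rev u) \<in> U"
      unfolding muPL_trans_def by auto
    have "(w, []) \<in> approx_rel \<delta> c" using w(1) cls_eq by metis
    then have "(w @ rev u, rev u) \<in> approx_rel \<delta> c" using R_right by fastforce
    then show "cls \<delta> c (rev u) \<in> U" using w(2) cls_eq by metis
  next
    assume "cls \<delta> c (rev u) \<in> U"
    then have "\<exists>w. cls \<delta> c [] = cls \<delta> c w \<and> cls \<delta> c (w @ rev u) \<in> U"
      by (intro exI[of _ "[]"]) simp
    then show "cls \<delta> c [] \<in> muPL_trans \<delta> c U u" unfolding muPL_trans_def by (simp only: mem_Collect_eq)
  qed
  then show ?thesis unfolding muPL_lang_def by blast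
qed

definition sat :: "('x \<Rightarrow> 'a \<Rightarrow> 'x) \<Rightarrow> 'x set \<Rightarrow> 'a list set \<Rightarrow> bool" where
  "sat \<delta> c A \<longleftrightarrow> (\<forall>u v. cls \<delta> c (rev u) = cls \<delta> c (rev v) \<longrightarrow> (u \<in> A \<longleftrightarrow> v \<in> A))"

lemma image_char: "muPL_lang \<delta> c ` Pow (quot \<delta> c) = {A. sat \<delta> c A}"
proof (intro set_eqI iffI)
  fix A assume "A \<in> muPL_lang \<delta> c ` Pow (quot \<delta> c)"
  then obtain U where "A = muPL_lang \<delta> c U" by (rule imageE)
  then have A: "A = {u. cls \<delta> c (rev u) \<in> U}" by (simp add: L_eq)
  have "sat \<delta> c A" unfolding sat_def A mem_Collect_eq by (intro allI impI) simp
  then show "A \<in> {A. sat \<delta> c A}" by simp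
next
  fix A assume "A \<in> {A. sat \<delta> c A}"
  then have s: "sat \<delta> c A" by simp
  define U where "U = {cls \<delta> c (rev u) | u. u \<in> A}"
  have "U \<subseteq> quot \<delta> c" unfolding U_def using cls_quot by auto
  then have UP: "U \<in> Pow (quot \<delta> c)" by simp
  have "cls \<delta> c (rev u) \<in> U \<longleftrightarrow> u \<in> A" for u
  proof
    assume "cls \<delta> c (rev u) \<in> U"
    then obtain v where v: "v \<in> A" "cls \<delta> c (rev u) = cls \<delta> c (rev v)" unfolding U_def by auto
    have "\<forall>u v. cls \<delta> c (rev u) = cls \<delta> c (rev v) \<longrightarrow> (u \<in> A \<longleftrightarrow> v \<in> A)"
      using s unfolding sat_def .
    then show "u \<in> A" using v by blast
  next
    assume "u \<in> A" then show "cls \<delta> c (rev u) \<in> U" unfolding U_def by auto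
  qed
  then have "muPL_lang \<delta> c U = A" unfolding L_eq by auto
  then show "A \<in> muPL_lang \<delta> c ` Pow (quot \<delta> c)" using UP by blast
qed

lemma sat_lderiv:
  assumes s: "sat \<delta> c A" shows "sat \<delta> c (lderiv a A)"
  unfolding sat_def
proof (intro allI impI)
  fix u v assume e: "cls \<delta> c (rev u) = cls \<delta> c (rev v)"
  have "(rev u @ [a], rev v @ [a]) \<in> approx_rel \<delta> c"
    using R_right e[unfolded cls_eq] by blast
  then have "cls \<delta> c (rev (a # u)) = cls \<delta> c (rev (a # v))" by (simp add: cls_eq)
  then have "(a # u \<in> A) = (a # v \<in> A)" using s unfolding sat_def by blast
  then show "(u \<in> lderiv a A) = (v \<in> lderiv a A)" unfolding lderiv_def by simp
qed

lemma sat_rderiv: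
  assumes s: "sat \<delta> c A" shows "sat \<delta> c (rderiv a A)"
  unfolding sat_def
proof (intro allI impI)
  fix u v assume e: "cls \<delta> c (rev u) = cls \<delta> c (rev v)"
  have "([a] @ rev u, [a] @ rev v) \<in> approx_rel \<delta> c"
    using R_left e[unfolded cls_eq] by blast
  then have "cls \<delta> c (rev (u @ [a])) = cls \<delta> c (rev (v @ [a]))" by (simp add: cls_eq)
  then have "(u @ [a] \<in> A) = (v @ [a] \<in> A)" using s unfolding sat_def by blast
  then show "(u \<in> rderiv a A) = (v \<in> rderiv a A)" unfolding rderiv_def by simp
qed

lemma atom_K: "is_atom {A. sat \<delta> c A} {v. cls \<delta> c (rev v) = cls \<delta> c (rev u)}"
  unfolding is_atom_def
proof (intro conjI ballI impI)
  show "{v. cls \<delta> c (rev v) = cls \<delta> c (rev u)} \<in> {A. sat \<delta> c A}"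
    unfolding sat_def by auto
  show "{v. cls \<delta> c (rev v) = cls \<delta> c (rev u)} \<noteq> {}" by blast
next
  fix V assume "V \<in> {A. sat \<delta> c A}" and sub: "V \<subseteq> {v. cls \<delta> c (rev v) = cls \<delta> c (rev u)}"
  then have s: "sat \<delta> c V" by simp
  show "V = {} \<or> V = {v. cls \<delta> c (rev v) = cls \<delta> c (rev u)}"
  proof (cases "V = {}")
    case False
    then obtain v where v: "v \<in> V" by blast
    have "V = {v. cls \<delta> c (rev v) = cls \<delta> c (rev u)}"
    proof
      show "{v. cls \<delta> c (rev v) = cls \<delta> c (rev u)} \<subseteq> V"
      proof
        fix v' assume "v' \<in> {v. cls \<delta> c (rev v) = cls \<delta> c (rev u)}"
        then have "cls \<delta> c (rev v') = cls \<delta> c (rev v)" using v sub by auto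
        then show "v' \<in> V" using s v unfolding sat_def by blast
      qed
    qed (rule sub)
    then show ?thesis by blast
  qed simp
qed

lemma pre_sat: "preformation {A. sat \<delta> c A}"
  unfolding preformation_def complete_atomic_boolean_subalgebra_def
proof (intro conjI allI impI ballI)
  fix S assume "S \<subseteq> {A. sat \<delta> c A}"
  then show "\<Union>S \<in> {A. sat \<delta> c A}" "\<Inter>S \<in> {A. sat \<delta> c A}"
    unfolding sat_def by blast+
next
  fix U assume "U \<in> {A. sat \<delta> c A}"
  then show "- U \<in> {A. sat \<delta> c A}" unfolding sat_def by blast
next
  fix U a assume "U \<in> {A. sat \<delta> c A}"
  then show "lderiv a U \<in> {A. sat \<delta> c A}" "rderiv a U \<in> {A. sat \<delta> c A}"
    using sat_lderiv sat_rderiv by auto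
next
  fix U assume U: "U \<in> {A. sat \<delta> c A}"
  show "U = \<Union>{A. is_atom {A. sat \<delta> c A} A \<and> A \<subseteq> U}"
  proof
    show "U \<subseteq> \<Union>{A. is_atom {A. sat \<delta> c A} A \<and> A \<subseteq> U}"
    proof
      fix u assume u: "u \<in> U"
      have "{v. cls \<delta> c (rev v) = cls \<delta> c (rev u)} \<subseteq> U"
        using U u unfolding sat_def by blast
      then show "u \<in> \<Union>{A. is_atom {A. sat \<delta> c A} A \<and> A \<subseteq> U}"
        using atom_K[of \<delta> c u] by blast
    qed
  qed blast
qed

theorem mainTheorem6:
  fixes \<delta> :: "'x \<Rightarrow> 'a::finite \<Rightarrow> 'x" and c :: "'x set"
  defines "S \<equiv> Pow (quot \<delta> c)"
      and "L \<equiv> muPL_lang \<delta> c"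
  shows "preformation (L ` S)
    \<and> bij_betw L S (L ` S)
    \<and> (\<forall>\<U>\<in>S. \<forall>\<V>\<in>S. \<U> \<subseteq> \<V> \<longleftrightarrow> L \<U> \<subseteq> L \<V>)
    \<and> (\<forall>\<SS>\<subseteq>S. L (\<Union>\<SS>) = \<Union>(L ` \<SS>))
    \<and> (\<forall>\<U>\<in>S. L (quot \<delta> c - \<U>) = - L \<U>)
    \<and> (\<forall>\<U>\<in>S. \<forall>a. muPL_trans \<delta> c \<U> [a] \<in> S \<and> L (muPL_trans \<delta> c \<U> [a]) = lderiv a (L \<U>))
    \<and> (\<forall>\<U>\<in>S. \<U> \<in> muPL_final \<delta> c \<longleftrightarrow> [] \<in> L \<U>)"
proof -
  have LE: "L U = {u. cls \<delta> c (rev u) \<in> U}" for U unfolding L_def by (rule L_eq)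
  have P1: "preformation (L ` S)" unfolding L_def S_def image_char by (rule pre_sat)
  have mono: "\<U> \<subseteq> \<V> \<longleftrightarrow> L \<U> \<subseteq> L \<V>" if US: "\<U> \<in> S" "\<V> \<in> S" for \<U> \<V>
  proof
    assume "\<U> \<subseteq> \<V>" then show "L \<U> \<subseteq> L \<V>" unfolding LE by blast
  next
    assume sub: "L \<U> \<subseteq> L \<V>"
    show "\<U> \<subseteq> \<V>"
    proof
      fix X assume X: "X \<in> \<U>"
      then obtain w where w: "X = cls \<delta> c w" using US(1) X quot_cls unfolding S_def by blast
      then have "rev w \<in> L \<U>" using X unfolding LE by simp
      then have "rev w \<in> L \<V>" using sub by blast
      then show "X \<in> \<V>" using w unfolding LE by simp
    qed
  qed
  have P2: "bij_betw L S (L ` S)"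
    unfolding bij_betw_def inj_on_def using mono by blast
  have P4: "\<forall>\<SS>\<subseteq>S. L (\<Union>\<SS>) = \<Union>(L ` \<SS>)" unfolding LE by blast
  have P5: "\<forall>\<U>\<in>S. L (quot \<delta> c - \<U>) = - L \<U>" unfolding LE by (auto simp: cls_quot)
  have P6: "muPL_trans \<delta> c \<U> [a] \<in> S \<and> L (muPL_trans \<delta> c \<U> [a]) = lderiv a (L \<U>)" for \<U> a
  proof
    show "muPL_trans \<delta> c \<U> [a] \<in> S" unfolding S_def muPL_trans_def using cls_quot by blast
    have "cls \<delta> c (rev u) \<in> muPL_trans \<delta> c \<U> [a] \<longleftrightarrow> cls \<delta> c (rev u @ [a]) \<in> \<U>" for u
    proof
      assume "cls \<delta> c (rev u) \<in> muPL_trans \<delta> c \<U> [a]"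
      then obtain w where w: "cls \<delta> c (rev u) = cls \<delta> c w" "cls \<delta> c (w @ [a]) \<in> \<U>"
        unfolding muPL_trans_def by auto
      have "(w @ [a], rev u @ [a]) \<in> approx_rel \<delta> c" using w(1) cls_eq R_right by metis
      then show "cls \<delta> c (rev u @ [a]) \<in> \<U>" using w(2) cls_eq by metis
    next
      assume "cls \<delta> c (rev u @ [a]) \<in> \<U>"
      then have "\<exists>w. cls \<delta> c (rev u) = cls \<delta> c w \<and> cls \<delta> c (w @ rev [a]) \<in> \<U>"
        by (intro exI[of _ "rev u"]) simp
      then show "cls \<delta> c (rev u) \<in> muPL_trans \<delta> c \<U> [a]" unfolding muPL_trans_def
        by (simp only: mem_Collect_eq)
    qed
    then show "L (muPL_trans \<delta> c \<U> [a]) = lderiv a (L \<U>)"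
      unfolding LE lderiv_def by simp
  qed
  have P7: "\<forall>\<U>\<in>S. \<U> \<in> muPL_final \<delta> c \<longleftrightarrow> [] \<in> L \<U>"
    unfolding LE S_def muPL_final_def by simp
  have P3: "\<forall>\<U>\<in>S. \<forall>\<V>\<in>S. \<U> \<subseteq> \<V> \<longleftrightarrow> L \<U> \<subseteq> L \<V>" using mono by blast
  have P6': "\<forall>\<U>\<in>S. \<forall>a. muPL_trans \<delta> c \<U> [a] \<in> S \<and> L (muPL_trans \<delta> c \<U> [a]) = lderiv a (L \<U>)"
    using P6 by blast
  show ?thesis using P1 P2 P3 P4 P5 P6' P7 by (intro conjI)
qed

end
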